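(* Let $n\ge2$ and $B\in\mathrm{M}_n(E_1)$ with $\mathrm{tr}(B^t)=0$ for all $1\le t\le 2n-2$. Then $nB^{2n-1}=\mathrm{tr}(B^{2n-1})I_n$; in particular $B^{2n-1}$ is a scalar matrix. If moreover $\mathrm{tr}(B^{2n-1})=0$, then $B^{2n-1}=0$.
   Context: $K$ is a field of characteristic zero. $E$ is the infinite-dimensional Grassmann (exterior) algebra over $K$, generated by countably many indeterminates $v_1,v_2,\dots$ subject to $v_iv_j+v_jv_i=0$ for all $i,j$. $E=E_0\oplus E_1$ is its natural $\mathbb{Z}_2$-grading: $E_0$ (resp. $E_1$) is the $K$-span of products of an even (resp. odd) number of generators. $\mathrm{M}_n(E_1)$ denotes the $n\times n$ matrices with entries in $E_1$, $I_n$ the identity matrix, $\mathrm{tr}$ the sum of diagonal entries. *)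

theory Defs
  imports Main
begin

text \<open>The infinite Grassmann algebra E over a field 'a, generated by v_0, v_1, ...
  An element is represented by its coefficient function on monomials:
  f S is the coefficient of v_S = v_{s1} ... v_{sk} (s1 < ... < sk) for a finite S.\<close>

type_synonym 'a grass = "nat set \<Rightarrow> 'a"

definition grass :: "'a::zero grass \<Rightarrow> bool" where
  "grass f \<longleftrightarrow> finite {S. f S \<noteq> 0} \<and> (\<forall>S. f S \<noteq> 0 \<longrightarrow> finite S)"

definition grass_odd :: "'a::zero grass \<Rightarrow> bool" where
  "grass_odd f \<longleftrightarrow> grass f \<and> (\<forall>S. f S \<noteq> 0 \<longrightarrow> odd (card S))"

text \<open>Sign with v_S v_T = gsign S T v_{S \<union> T} for disjoint S, T (number of inversions).\<close>
definition gsign :: "nat set \<Rightarrow> nat set \<Rightarrow> 'a::ring_1" where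
  "gsign S T = (if even (card {(s,t). s \<in> S \<and> t \<in> T \<and> t < s}) then 1 else -1)"

definition gmult :: "'a::ring_1 grass \<Rightarrow> 'a grass \<Rightarrow> 'a grass" where
  "gmult f g = (\<lambda>U. \<Sum>S\<in>{S. S \<subseteq> U}. gsign S (U - S) * f S * g (U - S))"

definition gzero :: "'a::zero grass" where
  "gzero = (\<lambda>_. 0)"

text \<open>n x n matrices over E, as functions on indices (only entries i, j < n matter).\<close>
type_synonym 'a gmat = "nat \<Rightarrow> nat \<Rightarrow> 'a grass"

definition gmat_mult :: "nat \<Rightarrow> 'a::ring_1 gmat \<Rightarrow> 'a gmat \<Rightarrow> 'a gmat" where
  "gmat_mult n A B = (\<lambda>i j U. \<Sum>k<n. gmult (A i k) (B k j) U)"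

definition gmat_one :: "'a::ring_1 gmat" where
  "gmat_one = (\<lambda>i j U. if i = j \<and> U = {} then 1 else 0)"

fun gmat_pow :: "nat \<Rightarrow> 'a::ring_1 gmat \<Rightarrow> nat \<Rightarrow> 'a gmat" where
  "gmat_pow n A 0 = gmat_one"
| "gmat_pow n A (Suc t) = gmat_mult n A (gmat_pow n A t)"

definition gtrace :: "nat \<Rightarrow> 'a::ring_1 gmat \<Rightarrow> 'a grass" where
  "gtrace n A = (\<lambda>U. \<Sum>i<n. A i i U)"

end

theory Submission
  imports Defs "Jordan_Normal_Form.Char_Poly"
begin


function pd :: "('a :: comm_ring_1) poly \<Rightarrow> 'a poly"
  where "pd (pCons a p) = (if p = 0 then 0 else p + pCons 0 (pd p))"
  by (auto intro: pCons_cases)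

termination pd
  by (relation "measure degree") simp_all

declare pd.simps[simp del]

lemma pd_0 [simp]: "pd 0 = 0"
  using pd.simps [of 0 0] by simp

lemma pd_pCons: "pd (pCons a p) = p + pCons 0 (pd p)"
  by (simp add: pd.simps)

lemma coeff_pd: "coeff (pd p) n = of_nat (Suc n) * coeff p (Suc n)"
  by (induct p arbitrary: n)
    (auto simp add: pd_pCons coeff_pCons algebra_simps split: nat.split)

lemma pd_add: "pd (p + q) = pd p + pd q"
  by (rule poly_eqI) (simp add: coeff_pd algebra_simps)

lemma pd_minus: "pd (- p) = - pd p"
  by (rule poly_eqI) (simp add: coeff_pd algebra_simps)

lemma pd_smult: "pd (Polynomial.smult a p) = Polynomial.smult a (pd p)"
  by (rule poly_eqI) (simp add: coeff_pd algebra_simps)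

lemma pd_const[simp]: "pd [:a:] = 0"
  by (simp add: pd_pCons)

lemma pd_1[simp]: "pd 1 = 0"
  by (simp add: one_pCons pd_pCons)

lemma pd_mult: "pd (p * q) = p * pd q + q * pd p"
  by (induct p) (auto simp: pd_add pd_smult pd_pCons algebra_simps)

lemma pd_sum: "pd (sum f A) = (\<Sum>a\<in>A. pd (f a))"
  by (induct A rule: infinite_finite_induct) (auto simp: pd_add)

lemma pd_prod: "pd (prod f (as)) = (\<Sum>a\<in>as. prod f (as - {a}) * pd (f a))"
proof (induct as rule: infinite_finite_induct)
  case (insert a as)
  then have id: "prod f (insert a as) = f a * prod f as"
    "\<And>g. sum g (insert a as) = g a + sum g as"
    "insert a as - {a} = as"
    by auto
  have "prod f (insert a as - {b}) = f a * prod f (as - {b})" if "b \<in> as" for b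
  proof -
    from \<open>a \<notin> as\<close> that have *: "insert a as - {b} = insert a (as - {b})"
      by auto
    show ?thesis
      unfolding * by (subst prod.insert) (use insert in auto)
  qed
  then show ?case
    unfolding id pd_mult insert(3) sum_distrib_left
    by (auto simp add: ac_simps intro!: sum.cong)
qed auto

lemma pd_char_poly: fixes A :: "'a :: comm_ring_1 mat" 
  assumes A: "A \<in> carrier_mat n n" 
  shows "pd (char_poly A) = (\<Sum>i < n. char_poly (mat_delete A i i))"
proof -
  let ?det = Determinant.det
  let ?m = "map_mat (\<lambda>a. [:- a:])" 
  let ?lam = "[:0, 1:] \<cdot>\<^sub>m 1\<^sub>m n :: 'a poly mat" 
  from A have id: "dim_row A = n" by auto  

  define mA where "mA = ?m A"
  define lam where "lam = ?lam" 
  let ?sum = "lam + mA" 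
  define Sum where "Sum = ?sum" 
  have mA: "mA \<in> carrier_mat n n" and 
    lam: "lam \<in> carrier_mat n n" and
    Sum: "Sum \<in> carrier_mat n n" 
    using A unfolding mA_def Sum_def lam_def by auto
  let ?P = "{p. p permutes {0..<n}}" 
  let ?e = "\<lambda> p. (\<Prod>i = 0..<n. Sum $$ (i, p i))" 
  let ?f = "\<lambda> p a. signof p * (\<Prod>i\<in>{0..<n} - {a}. Sum $$ (i, p i)) * pd (Sum $$ (a, p a))" 
  let ?g = "\<lambda> p a. signof p * (\<Prod>i\<in>{0..<n} - {a}. Sum $$ (i, p i))" 
  define f where "f = ?f" 
  define g where "g = ?g" 
  {
    fix p
    assume p: "p permutes {0 ..< n}" 
    have "pd (signof p :: 'a poly) = 0"
      by (cases p rule: sign_cases) (simp_all add: pd_minus) 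
    hence "pd (signof p * ?e p) = signof p * pd (\<Prod>i = 0..<n. Sum $$ (i, p i))" 
      unfolding pd_mult by auto
    also have "signof p * pd (\<Prod>i = 0..<n. Sum $$ (i, p i)) = 
       (\<Sum>a = 0..<n. f p a)" 
      unfolding pd_prod sum_distrib_left f_def by (simp add: ac_simps)
    also note calculation
  } note to_f = this
  {
    fix a
    assume a: "a < n" 
    have Psplit: "?P = {p. p permutes {0..<n} \<and> p a = a} \<union> (?P - {p. p a = a})" (is "_ = ?Pa \<union> ?Pz") by auto 
    {
      fix p
      assume p: "p permutes {0 ..< n}" "p a \<noteq> a"
      hence "pd (Sum $$ (a, p a)) = 0" unfolding Sum_def lam_def mA_def using a p A by auto
      hence "f p a = 0" unfolding f_def by auto
    } note 0 = this
    {
      fix p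
      assume p: "p permutes {0 ..< n}" "p a = a"
      hence "pd (Sum $$ (a, p a)) = 1" unfolding Sum_def lam_def mA_def using a p A
        by (auto simp: pd_pCons)
      hence "f p a = g p a" unfolding f_def g_def by auto
    } note fg = this
    let ?n = "n - 1" 
    from a have n: "Suc ?n = n" by simp
    let ?B = "[:0, 1:] \<cdot>\<^sub>m 1\<^sub>m ?n + ?m (mat_delete A a a)" 
    have B: "?B \<in> carrier_mat ?n ?n" using A by auto
    have "sum (\<lambda> p. f p a) ?P = sum (\<lambda> p. f p a) ?Pa + sum (\<lambda> p. f p a) ?Pz" 
      by (subst sum.union_disjoint[symmetric], auto simp: finite_permutations Psplit[symmetric])
    also have "\<dots> = sum (\<lambda> p. f p a) ?Pa" 
      by (subst (2) sum.neutral, insert 0, auto)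
    also have "\<dots> = sum (\<lambda> p. g p a) ?Pa" 
      by (rule sum.cong, auto simp: fg)
    also have "\<dots> = ?det ?B"
      unfolding det_def'[OF B] 
      unfolding permutation_fix[of a ?n a, unfolded n, OF a a]
      unfolding sum.reindex[OF permutation_insert_inj_on[of a ?n a, unfolded n, OF a a]] o_def
    proof (rule sum.cong[OF refl])
      fix p
      let ?Q = "{p. p permutes {0..<?n}}" 
      assume "p \<in> ?Q"      
      hence p: "p permutes {0 ..< ?n}" by auto
      let ?p = "permutation_insert a a p"
      let ?i = "insert_index a" 
      have sign: "signof ?p = signof p" 
        unfolding signof_permutation_insert[OF p, unfolded n, OF a a] by simp
      show "g (permutation_insert a a p) a = signof p * (\<Prod>i = 0..<?n. ?B $$ (i, p i))" 
        unfolding g_def sign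
      proof (rule arg_cong[of _ _ "(*) (signof p)"])
        have "(\<Prod>i\<in>{0..<n} - {a}. Sum $$ (i, ?p i)) = 
           prod (($$) Sum) ((\<lambda>x. (x, ?p x)) ` ({0..<n} - {a}))"
          unfolding prod.reindex[OF inj_on_convol_ident, of _ ?p] o_def ..
        also have "\<dots> = (\<Prod> ii \<in> {(i', ?p i') |i'. i' \<in> {0..<n} - {a}}. Sum $$ ii)" 
          by (rule prod.cong, auto)
        also have "\<dots> = prod (($$) Sum) ((\<lambda> i. (?i i, ?i (p i))) ` {0 ..< ?n})" 
          unfolding Determinant.foo[of a ?n a, unfolded n, OF a a p]
          by (rule arg_cong[of _ _ "prod _"], auto) 
        also have "\<dots> = prod (\<lambda> i. Sum $$ (?i i, ?i (p i))) {0 ..< ?n}"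
        proof (subst prod.reindex, unfold o_def)
          show "inj_on (\<lambda>i. (?i i, ?i (p i))) {0..<?n}" using insert_index_inj_on[of a]
            by (auto simp: inj_on_def)
        qed simp
        also have "\<dots> = (\<Prod>i = 0..<?n. ?B $$ (i, p i))" 
        proof (rule prod.cong[OF refl], rename_tac i)
          fix j
          assume "j \<in> {0 ..< ?n}"
          hence j: "j < ?n" by auto
          with p have pj: "p j < ?n" by auto
          from j pj have jj: "?i j < n" "?i (p j) < n" by (auto simp: insert_index_def)
          let ?jj = "(?i j, ?i (p j))" 
          note index_adj = mat_delete_index[of _ ?n, unfolded n, OF _ a a j pj]
          have "Sum $$ ?jj = lam $$ ?jj + mA $$ ?jj" unfolding Sum_def using jj A lam mA by auto
          also have "\<dots> = ?B $$ (j, p j)" 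
            unfolding index_adj[OF mA] index_adj[OF lam] using j pj A
            by (simp add: mA_def lam_def mat_delete_def)
          finally show "Sum $$ ?jj = ?B $$ (j, p j)" .
        qed
        finally 
        show "(\<Prod>i\<in>{0..<n} - {a}. Sum $$ (i, ?p i)) = (\<Prod>i = 0..<?n. ?B $$ (i, p i))" .
      qed
    qed
    also have "\<dots> = char_poly (mat_delete A a a)" unfolding char_poly_def char_poly_matrix_def
      using A by simp
    also note calculation
  } note to_char_poly = this
  have "pd (char_poly A) = pd (?det Sum)" 
    unfolding char_poly_def char_poly_matrix_def id lam_def mA_def Sum_def by auto
  also have "\<dots> = sum (\<lambda> p. pd (signof p * ?e p)) ?P" unfolding det_def'[OF Sum]
    pd_sum by (rule sum.cong, auto)
  also have "\<dots> = sum (\<lambda> p. (\<Sum>a = 0..<n. f p a)) ?P" 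
    by (rule sum.cong[OF refl], subst to_f, auto)
  also have "\<dots> = (\<Sum>a = 0..<n. sum (\<lambda> p. f p a) ?P)" 
    by (rule sum.swap) 
  also have "\<dots> = (\<Sum>a <n. char_poly (mat_delete A a a))" 
    by (rule sum.cong, auto simp: to_char_poly)
  finally show ?thesis .
qed    



fun fpow :: "nat \<Rightarrow> (nat \<Rightarrow> nat \<Rightarrow> 'r::comm_ring_1) \<Rightarrow> nat \<Rightarrow> nat \<Rightarrow> nat \<Rightarrow> 'r" where
  "fpow n d 0 = (\<lambda>i j. if i = j then 1 else 0)"
| "fpow n d (Suc k) = (\<lambda>i j. \<Sum>l<n. d i l * fpow n d k l j)"

lemma mat_delete_char_poly_matrix:
  assumes A: "A \<in> carrier_mat n n" and i: "i < n"
  shows "mat_delete (char_poly_matrix A) i i = char_poly_matrix (mat_delete A i i)"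
  unfolding char_poly_matrix_def
  using i A by (auto simp: mat_delete_def)

lemma adj_diag_char_poly:
  assumes A: "A \<in> carrier_mat n n" and i: "i < n"
  shows "adj_mat (char_poly_matrix A) $$ (i,i) = char_poly (mat_delete A i i)"
proof -
  have P: "char_poly_matrix A \<in> carrier_mat n n" using A by simp
  have "adj_mat (char_poly_matrix A) $$ (i,i) = cofactor (char_poly_matrix A) i i"
    unfolding adj_mat_def using P i by simp
  also have "\<dots> = det (mat_delete (char_poly_matrix A) i i)"
    unfolding cofactor_def by (simp add: power_even_eq[symmetric] flip: mult_2)
  finally show ?thesis unfolding char_poly_def mat_delete_char_poly_matrix[OF A i] .
qed


context
  fixes n :: nat and d :: "nat \<Rightarrow> nat \<Rightarrow> 'r::comm_ring_1"
begin

definition "Am = mat n n (\<lambda>(i,j). d i j)"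
definition "Pm = char_poly_matrix Am"
definition "Qm = adj_mat Pm"
definition "Mf m i j = coeff (Qm $$ (i,j)) m"
definition "cc m = coeff (char_poly Am) m"

lemma Am_carrier: "Am \<in> carrier_mat n n" unfolding Am_def by simp
lemma Pm_carrier: "Pm \<in> carrier_mat n n" unfolding Pm_def using Am_carrier by simp
lemma Qm_carrier: "Qm \<in> carrier_mat n n" unfolding Qm_def using Pm_carrier adj_mat by blast

lemma PQ_entry:
  assumes i: "i < n" and j: "j < n"
  shows "(\<Sum>k<n. Pm $$ (i,k) * Qm $$ (k,j)) = (if i = j then char_poly Am else 0)"
proof -
  have "Pm * Qm = det Pm \<cdot>\<^sub>m 1\<^sub>m n" unfolding Qm_def using adj_mat(2)[OF Pm_carrier] .
  hence "(Pm * Qm) $$ (i,j) = (det Pm \<cdot>\<^sub>m 1\<^sub>m n) $$ (i,j)" by simp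
  moreover have "(Pm * Qm) $$ (i,j) = (\<Sum>k<n. Pm $$ (i,k) * Qm $$ (k,j))"
    using i j Pm_carrier Qm_carrier
    by (auto simp: scalar_prod_def atLeast0LessThan intro!: sum.cong)
  ultimately show ?thesis using i j unfolding char_poly_def Pm_def[symmetric] by simp
qed

lemma Pm_entry: "i < n \<Longrightarrow> k < n \<Longrightarrow> Pm $$ (i,k) = [: - d i k, (if i = k then 1 else 0) :]"
  unfolding Pm_def char_poly_matrix_def Am_def by auto

lemma coeff_pcons2_Suc: "coeff ([: a, b :] * q) (Suc m) = a * coeff q (Suc m) + b * coeff q m"
  by (simp add: algebra_simps)

lemma coeff_pcons2_0: "coeff ([: a, b :] * q) 0 = a * coeff q 0"
  by (simp add: algebra_simps)

lemma Mf_rec: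
  assumes i: "i < n" and j: "j < n"
  shows "Mf m i j = (\<Sum>k<n. d i k * Mf (Suc m) k j) + (if i = j then cc (Suc m) else 0)"
proof -
  have "coeff (\<Sum>k<n. Pm $$ (i,k) * Qm $$ (k,j)) (Suc m) = (if i = j then cc (Suc m) else 0)"
    unfolding PQ_entry[OF i j] cc_def by simp
  moreover have "coeff (\<Sum>k<n. Pm $$ (i,k) * Qm $$ (k,j)) (Suc m)
     = (\<Sum>k<n. - d i k * Mf (Suc m) k j + (if i = k then Mf m k j else 0))"
    unfolding coeff_sum Mf_def
    by (rule sum.cong, simp, subst Pm_entry[OF i], simp, subst coeff_pcons2_Suc, simp)
  moreover have "(\<Sum>k<n. - d i k * Mf (Suc m) k j + (if i = k then Mf m k j else 0))
     = - (\<Sum>k<n. d i k * Mf (Suc m) k j) + Mf m i j"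
    using i by (simp add: sum_subtractf sum.delta sum.delta')
  ultimately show ?thesis by (simp add: algebra_simps)
qed

lemma Mf_0:
  assumes i: "i < n" and j: "j < n"
  shows "(\<Sum>k<n. d i k * Mf 0 k j) = - (if i = j then cc 0 else 0)"
proof -
  have "coeff (\<Sum>k<n. Pm $$ (i,k) * Qm $$ (k,j)) 0 = (if i = j then cc 0 else 0)"
    unfolding PQ_entry[OF i j] cc_def by simp
  moreover have "coeff (\<Sum>k<n. Pm $$ (i,k) * Qm $$ (k,j)) 0
     = (\<Sum>k<n. - d i k * Mf 0 k j)"
    unfolding coeff_sum Mf_def
    by (rule sum.cong, simp, subst Pm_entry[OF i], simp, subst coeff_pcons2_0, simp)
  ultimately have "- (\<Sum>k<n. d i k * Mf 0 k j) = (if i = j then cc 0 else 0)"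
    by (simp add: sum_negf)
  thus ?thesis by (simp add: minus_equation_iff)
qed

lemma jacobi:
  "of_nat (Suc m) * cc (Suc m) = (\<Sum>i<n. Mf m i i)"
proof -
  have "pd (char_poly Am) = (\<Sum>i<n. Qm $$ (i,i))"
    unfolding pd_char_poly[OF Am_carrier] Qm_def Pm_def
    by (rule sum.cong, simp, subst adj_diag_char_poly[OF Am_carrier], auto)
  hence "coeff (pd (char_poly Am)) m = (\<Sum>i<n. Mf m i i)"
    unfolding Mf_def by (simp add: coeff_sum)
  thus ?thesis unfolding coeff_pd cc_def .
qed


lemma cc_high: "m > n \<Longrightarrow> cc m = 0"
  unfolding cc_def using degree_monic_char_poly[OF Am_carrier] by (simp add: coeff_eq_0)

lemma cc_n: "cc n = 1"
  unfolding cc_def using degree_monic_char_poly[OF Am_carrier] by simp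

lemma Mf_big:
  assumes "m \<ge> n" "i < n" "j < n"
  shows "Mf m i j = 0"
proof -
  define N where "N = Suc (Max {degree (Qm $$ (i,j)) | i j. i < n \<and> j < n})"
  have fin: "finite {degree (Qm $$ (i,j)) | i j. i < n \<and> j < n}"
  proof -
    have "{degree (Qm $$ (i,j)) | i j. i < n \<and> j < n} = (\<lambda>(i,j). degree (Qm $$ (i,j))) ` ({..<n} \<times> {..<n})"
      by auto
    thus ?thesis by simp
  qed
  have hi: "Mf m i j = 0" if "m \<ge> N" "i < n" "j < n" for m i j
  proof -
    have "degree (Qm $$ (i,j)) \<le> Max {degree (Qm $$ (i,j)) | i j. i < n \<and> j < n}"
      using that fin by (intro Max_ge) auto
    hence "degree (Qm $$ (i,j)) < m" using that unfolding N_def by simp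
    thus ?thesis unfolding Mf_def by (simp add: coeff_eq_0)
  qed
  have "\<forall>m. N - m = t \<longrightarrow> m \<ge> n \<longrightarrow> (\<forall>i<n. \<forall>j<n. Mf m i j = 0)" for t
  proof (induction t)
    case 0
    then show ?case using hi by auto
  next
    case (Suc t)
    show ?case
    proof (intro allI impI)
      fix m i j assume mt: "N - m = Suc t" and mn: "m \<ge> n" and i: "i < n" and j: "j < n"
      have "N - Suc m = t" using mt by simp
      hence z: "\<forall>k<n. Mf (Suc m) k j = 0" using Suc.IH mn j by auto
      show "Mf m i j = 0" unfolding Mf_rec[OF i j] using z cc_high[of "Suc m"] mn by simp
    qed
  qed
  thus ?thesis using assms by blast
qed

definition "ftr k = (\<Sum>i<n. fpow n d k i i)"

lemma main_rec:
  assumes tf: "\<And>k (x::'r). k > 0 \<Longrightarrow> of_nat k * x = 0 \<Longrightarrow> x = 0"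
    and tr0: "\<And>k. 1 \<le> k \<Longrightarrow> k < n \<Longrightarrow> ftr k = 0"
    and mn: "m < n"
  shows "(\<forall>i<n. \<forall>j<n. Mf m i j = fpow n d (n - 1 - m) i j)"
proof -
  have "\<forall>m. n - 1 - m = t \<longrightarrow> m < n \<longrightarrow> (\<forall>i<n. \<forall>j<n. Mf m i j = fpow n d (n - 1 - m) i j)" for t
  proof (induction t)
    case 0
    show ?case
    proof (intro allI impI)
      fix m i j assume "n - 1 - m = 0" "m < n" "i < n" "j < n"
      hence m: "Suc m = n" by simp
      show "Mf m i j = fpow n d (n - 1 - m) i j"
      proof -
        have "\<forall>k<n. Mf (Suc m) k j = 0" using Mf_big[of "Suc m" _ j] m \<open>j<n\<close> by simp
        thus ?thesis unfolding Mf_rec[OF \<open>i<n\<close> \<open>j<n\<close>] using m cc_n by simp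
      qed
    qed
  next
    case (Suc t)
    show ?case
    proof (intro allI impI)
      fix m i0 j0 assume mt: "n - 1 - m = Suc t" and mn: "m < n" and ij: "i0 < n" "j0 < n"
      have e: "n - 1 - Suc m = t" using mt by simp
      have sm: "Suc m < n" using mt by arith
      have IH: "\<forall>i<n. \<forall>j<n. Mf (Suc m) i j = fpow n d t i j"
        using Suc.IH e sm by blast
      have k: "n - 1 - m = Suc t" by (fact mt)
      have rec: "Mf m i j = fpow n d (Suc t) i j + (if i = j then cc (Suc m) else 0)"
        if "i < n" "j < n" for i j
        unfolding Mf_rec[OF that] using IH that by simp
      have "of_nat (Suc m) * cc (Suc m) = (\<Sum>i<n. Mf m i i)" by (rule jacobi)
      also have "\<dots> = (\<Sum>i<n. fpow n d (Suc t) i i + cc (Suc m))"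
        by (rule sum.cong) (auto simp: rec)
      also have "\<dots> = ftr (Suc t) + of_nat n * cc (Suc m)"
        unfolding ftr_def by (simp add: sum.distrib)
      also have "ftr (Suc t) = 0" using tr0[of "Suc t"] sm k by linarith
      finally have eq: "of_nat (Suc m) * cc (Suc m) = of_nat n * cc (Suc m)" by simp
      have nn: "n = (n - Suc m) + Suc m" using sm by simp
      have "of_nat n * cc (Suc m) = of_nat ((n - Suc m) + Suc m) * cc (Suc m)"
        using nn by metis
      also have "\<dots> = of_nat (n - Suc m) * cc (Suc m) + of_nat (Suc m) * cc (Suc m)"
        by (simp only: of_nat_add distrib_right)
      finally have "of_nat (n - Suc m) * cc (Suc m) = 0" using eq by simp
      moreover have "n - Suc m > 0" using sm by simp
      ultimately have "cc (Suc m) = 0" using tf by blast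
      thus "Mf m i0 j0 = fpow n d (n - 1 - m) i0 j0" using rec[OF ij] k by simp
    qed
  qed
  thus ?thesis using mn by blast
qed

theorem trace_CH:
  assumes tf: "\<And>k (x::'r). k > 0 \<Longrightarrow> of_nat k * x = 0 \<Longrightarrow> x = 0"
    and tr0: "\<And>k. 1 \<le> k \<Longrightarrow> k < n \<Longrightarrow> ftr k = 0"
    and n: "n \<ge> 1" and i: "i < n" and j: "j < n"
  shows "of_nat n * fpow n d n i j = (if i = j then ftr n else 0)"
proof -
  have M0: "\<forall>i<n. \<forall>j<n. Mf 0 i j = fpow n d (n - 1) i j" using main_rec[OF tf tr0, where m=0] n by simp
  have fp: "fpow n d n i j = - (if i = j then cc 0 else 0)" if "i < n" "j < n" for i j
  proof -
    have "fpow n d n i j = fpow n d (Suc (n - 1)) i j" using n by simp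
    also have "\<dots> = (\<Sum>k<n. d i k * fpow n d (n - 1) k j)" by (simp only: fpow.simps)
    also have "\<dots> = (\<Sum>k<n. d i k * Mf 0 k j)" using M0 that by (intro sum.cong) auto
    also have "\<dots> = - (if i = j then cc 0 else 0)" by (rule Mf_0[OF that])
    finally show ?thesis .
  qed
  have "ftr n = (\<Sum>i<n. - cc 0)" unfolding ftr_def by (rule sum.cong) (auto simp: fp)
  hence "ftr n = - of_nat n * cc 0" by simp
  thus ?thesis using fp[OF i j] by simp
qed
end



definition ninv :: "nat set \<Rightarrow> nat set \<Rightarrow> nat" where
  "ninv S T = card {(s,t). s \<in> S \<and> t \<in> T \<and> t < s}"

lemma gsign_pow: "gsign S T = (-1) ^ ninv S T"
  unfolding gsign_def ninv_def by (simp add: minus_one_power_iff)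

lemma ninv_fin: "finite S \<Longrightarrow> finite T \<Longrightarrow> finite {(s,t). s \<in> S \<and> t \<in> T \<and> t < s}"
  by (rule finite_subset[of _ "S \<times> T"]) auto

lemma ninv_union_left:
  assumes "finite S" "finite T" "finite W" "S \<inter> T = {}"
  shows "ninv (S \<union> T) W = ninv S W + ninv T W"
proof -
  have "{(s,t). s \<in> S \<union> T \<and> t \<in> W \<and> t < s} =
      {(s,t). s \<in> S \<and> t \<in> W \<and> t < s} \<union> {(s,t). s \<in> T \<and> t \<in> W \<and> t < s}" by auto
  thus ?thesis unfolding ninv_def using assms
    by (simp add: card_Un_disjoint ninv_fin disjoint_iff)
qed

lemma ninv_union_right:
  assumes "finite S" "finite T" "finite W" "T \<inter> W = {}"
  shows "ninv S (T \<union> W) = ninv S T + ninv S W"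
proof -
  have "{(s,t). s \<in> S \<and> t \<in> T \<union> W \<and> t < s} =
      {(s,t). s \<in> S \<and> t \<in> T \<and> t < s} \<union> {(s,t). s \<in> S \<and> t \<in> W \<and> t < s}" by auto
  thus ?thesis unfolding ninv_def using assms
    by (simp add: card_Un_disjoint ninv_fin disjoint_iff)
qed

lemma ninv_swap:
  assumes "finite S" "finite T" "S \<inter> T = {}"
  shows "ninv S T + ninv T S = card S * card T"
proof -
  have e: "S \<times> T = {(s,t). s \<in> S \<and> t \<in> T \<and> t < s} \<union> (\<lambda>(t,s). (s,t)) ` {(t,s). t \<in> T \<and> s \<in> S \<and> s < t}"
    using assms by (auto simp: image_iff)
  have inj: "inj_on (\<lambda>(t,s). (s,t)) X" for X :: "(nat \<times> nat) set" by (auto simp: inj_on_def)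
  have "card (S \<times> T) = ninv S T + ninv T S"
    unfolding e ninv_def using assms
    by (subst card_Un_disjoint) (auto simp: ninv_fin card_image[OF inj])
  thus ?thesis by (simp add: card_cartesian_product)
qed

lemma sign_assoc:
  fixes R T W :: "nat set"
  assumes "finite R" "finite T" "finite W" "R \<inter> T = {}" "R \<inter> W = {}" "T \<inter> W = {}"
  shows "(gsign (R \<union> T) W * gsign R T :: 'a::comm_ring_1) = gsign R (T \<union> W) * gsign T W"
  unfolding gsign_pow
  using assms by (simp add: ninv_union_left ninv_union_right power_add[symmetric] add_ac)

lemma gmult_infinite: "infinite U \<Longrightarrow> gmult f g U = 0"
proof -
  assume "infinite U"
  hence "infinite {S. S \<subseteq> U}"
    by (metis Pow_def finite_Pow_iff)
  thus ?thesis unfolding gmult_def by simp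
qed

lemma gmult_assoc:
  fixes f g h :: "'a::comm_ring_1 grass"
  shows "gmult (gmult f g) h = gmult f (gmult g h)"
proof
  fix U
  show "gmult (gmult f g) h U = gmult f (gmult g h) U"
  proof (cases "finite U")
    case False
    thus ?thesis by (simp add: gmult_infinite)
  next
    case fin: True
    have "gmult (gmult f g) h U = (\<Sum>S\<in>Pow U. \<Sum>R\<in>Pow S.
        gsign S (U - S) * gsign R (S - R) * f R * g (S - R) * h (U - S))"
      unfolding gmult_def Pow_def by (simp add: sum_distrib_left sum_distrib_right mult_ac)
    also have "\<dots> = (\<Sum>(S,R)\<in>Sigma (Pow U) Pow.
        gsign S (U - S) * gsign R (S - R) * f R * g (S - R) * h (U - S))"
      using fin by (subst sum.Sigma) (auto intro: finite_subset)
    also have "\<dots> = (\<Sum>(R,T)\<in>Sigma (Pow U) (\<lambda>R. Pow (U - R)).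
        gsign R (U - R) * gsign T (U - R - T) * f R * g T * h (U - R - T))"
    proof (rule sum.reindex_bij_witness[where i = "\<lambda>(R,T). (R \<union> T, R)" and j = "\<lambda>(S,R). (R, S - R)"])
      fix a assume "a \<in> Sigma (Pow U) (\<lambda>R. Pow (U - R))"
      then obtain R T where a: "a = (R,T)" "R \<subseteq> U" "T \<subseteq> U - R" by auto
      show "(case (case a of (R, T) \<Rightarrow> (R \<union> T, R)) of (S, R) \<Rightarrow> (R, S - R)) = a"
        using a by auto
      show "(case a of (R, T) \<Rightarrow> (R \<union> T, R)) \<in> Sigma (Pow U) Pow" using a by auto
    next
      fix b assume "b \<in> Sigma (Pow U) Pow"
      then obtain S R where b: "b = (S,R)" "S \<subseteq> U" "R \<subseteq> S" by auto
      show "(case (case b of (S, R) \<Rightarrow> (R, S - R)) of (R, T) \<Rightarrow> (R \<union> T, R)) = b"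
        using b by auto
      show "(case b of (S, R) \<Rightarrow> (R, S - R)) \<in> Sigma (Pow U) (\<lambda>R. Pow (U - R))" using b by auto
      have fR: "finite R" "finite (S - R)" "finite (U - S)" using b fin by (auto intro: finite_subset)
      have s: "gsign (R \<union> (S - R)) (U - S) * gsign R (S - R) = (gsign R ((S - R) \<union> (U - S)) * gsign (S - R) (U - S) :: 'a)"
        by (rule sign_assoc) (use fR b in auto)
      have e1: "U - R - (S - R) = U - S" using b by auto
      have e2: "R \<union> (S - R) = S" using b by auto
      have e3: "(S - R) \<union> (U - S) = U - R" using b by auto
      show "(case (case b of (S, R) \<Rightarrow> (R, S - R)) of (R, T) \<Rightarrow> gsign R (U - R) * gsign T (U - R - T) * f R * g T * h (U - R - T)) =
        (case b of (S, R) \<Rightarrow> gsign S (U - S) * gsign R (S - R) * f R * g (S - R) * h (U - S))"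
        unfolding b(1) case_prod_conv e1 using s[unfolded e2 e3] by (simp only:)
    qed
    also have "\<dots> = (\<Sum>R\<in>Pow U. \<Sum>T\<in>Pow (U - R).
        gsign R (U - R) * gsign T (U - R - T) * f R * g T * h (U - R - T))"
      using fin by (subst sum.Sigma) (auto intro: finite_subset)
    also have "\<dots> = gmult f (gmult g h) U"
      unfolding gmult_def Pow_def by (simp add: sum_distrib_left sum_distrib_right mult_ac)
    finally show ?thesis .
  qed
qed


lemma grass_zero[simp]: "grass (\<lambda>_. 0)" by (simp add: grass_def)
lemma grass_one[simp]: "grass (\<lambda>U. if U = {} then 1 else 0)" by (simp add: grass_def)

lemma grass_add[simp]: "grass f \<Longrightarrow> grass g \<Longrightarrow> grass (\<lambda>U. f U + g U :: 'a::comm_ring_1)"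
proof -
  assume f: "grass f" and g: "grass g"
  have "{S. f S + g S \<noteq> 0} \<subseteq> {S. f S \<noteq> 0} \<union> {S. g S \<noteq> 0}" by auto
  moreover have "\<And>S. f S + g S \<noteq> 0 \<Longrightarrow> f S \<noteq> 0 \<or> g S \<noteq> 0" by auto
  ultimately show ?thesis using f g unfolding grass_def by (meson finite_UnI finite_subset)
qed

lemma grass_uminus[simp]: "grass f \<Longrightarrow> grass (\<lambda>U. - f U :: 'a::ring_1)"
  unfolding grass_def by auto

lemma grass_diff[simp]: "grass f \<Longrightarrow> grass g \<Longrightarrow> grass (\<lambda>U. f U - g U :: 'a::comm_ring_1)"
proof -
  assume f: "grass f" and g: "grass g"
  have "{S. f S - g S \<noteq> 0} \<subseteq> {S. f S \<noteq> 0} \<union> {S. g S \<noteq> 0}" by auto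
  moreover have "\<And>S. f S - g S \<noteq> 0 \<Longrightarrow> f S \<noteq> 0 \<or> g S \<noteq> 0" by auto
  ultimately show ?thesis using f g unfolding grass_def by (meson finite_UnI finite_subset)
qed

lemma gmult_nonzero:
  assumes "gmult f g U \<noteq> 0"
  shows "finite U \<and> (\<exists>S. S \<subseteq> U \<and> f S \<noteq> 0 \<and> g (U - S) \<noteq> 0)"
proof -
  have fin: "finite U" using assms gmult_infinite by blast
  from assms obtain S where "S \<in> {S. S \<subseteq> U}" "gsign S (U - S) * f S * g (U - S) \<noteq> 0"
    unfolding gmult_def by (meson sum.not_neutral_contains_not_neutral)
  thus ?thesis using fin by auto
qed

lemma grass_gmult[simp]:
  assumes f: "grass f" and g: "grass g"
  shows "grass (gmult f g)"
proof -
  have "{U. gmult f g U \<noteq> 0} \<subseteq> (\<lambda>(S,T). S \<union> T) ` ({S. f S \<noteq> 0} \<times> {T. g T \<noteq> 0})"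
  proof
    fix U assume "U \<in> {U. gmult f g U \<noteq> 0}"
    then obtain S where "S \<subseteq> U" "f S \<noteq> 0" "g (U - S) \<noteq> 0" using gmult_nonzero by blast
    thus "U \<in> (\<lambda>(S,T). S \<union> T) ` ({S. f S \<noteq> 0} \<times> {T. g T \<noteq> 0})"
      by (auto intro!: image_eqI[of _ _ "(S, U - S)"])
  qed
  moreover have "finite ((\<lambda>(S,T). S \<union> T) ` ({S. f S \<noteq> 0} \<times> {T. g T \<noteq> 0}))"
    using f g unfolding grass_def by simp
  ultimately show ?thesis unfolding grass_def using gmult_nonzero by (meson finite_subset)
qed

lemma gmult_add_left: "gmult (\<lambda>U. f U + g U) h = (\<lambda>U. gmult f h U + gmult g h U)"
  unfolding gmult_def by (simp add: sum.distrib algebra_simps)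
lemma gmult_add_right: "gmult h (\<lambda>U. f U + g U) = (\<lambda>U. gmult h f U + gmult h g U)"
  unfolding gmult_def by (simp add: sum.distrib algebra_simps)
lemma gmult_diff_left: "gmult (\<lambda>U. f U - g U) h = (\<lambda>U. gmult f h U - gmult g h U)"
  unfolding gmult_def by (simp add: sum_subtractf algebra_simps)
lemma gmult_diff_right: "gmult h (\<lambda>U. f U - g U) = (\<lambda>U. gmult h f U - gmult h g U)"
  unfolding gmult_def by (simp add: sum_subtractf algebra_simps)
lemma gmult_minus_left: "gmult (\<lambda>U. - f U) h = (\<lambda>U. - gmult f h U)"
  unfolding gmult_def by (simp add: sum_negf algebra_simps)
lemma gmult_minus_right: "gmult h (\<lambda>U. - f U) = (\<lambda>U. - gmult h f U)"
  unfolding gmult_def by (simp add: sum_negf algebra_simps)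
lemma gmult_zero_left: "gmult (\<lambda>_. 0) h = (\<lambda>_. 0)"
  unfolding gmult_def by simp
lemma gmult_zero_right: "gmult h (\<lambda>_. 0) = (\<lambda>_. 0)"
  unfolding gmult_def by simp

lemma gsign_empty_left[simp]: "gsign {} U = 1" unfolding gsign_def by simp
lemma gsign_empty_right[simp]: "gsign U {} = 1" unfolding gsign_def by simp

lemma gmult_one_left:
  assumes "grass (f :: 'a::comm_ring_1 grass)"
  shows "gmult (\<lambda>U. if U = {} then 1 else 0) f = f"
proof
  fix U
  show "gmult (\<lambda>U. if U = {} then 1 else 0) f U = f U"
  proof (cases "finite U")
    case False
    thus ?thesis using assms unfolding grass_def by (auto simp: gmult_infinite)
  next
    case True
    have "gmult (\<lambda>U. if U = {} then 1 else 0) f U = (\<Sum>S\<in>{S. S \<subseteq> U}. if {} = S then f (U - S) else 0)"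
      unfolding gmult_def by (rule sum.cong) auto
    also have "\<dots> = f U" using True by (simp add: sum.delta' Pow_def[symmetric])
    finally show ?thesis .
  qed
qed

lemma gmult_one_right:
  assumes "grass (f :: 'a::comm_ring_1 grass)"
  shows "gmult f (\<lambda>U. if U = {} then 1 else 0) = f"
proof
  fix U
  show "gmult f (\<lambda>U. if U = {} then 1 else 0) U = f U"
  proof (cases "finite U")
    case False
    thus ?thesis using assms unfolding grass_def by (auto simp: gmult_infinite)
  next
    case True
    have "gmult f (\<lambda>U. if U = {} then 1 else 0) U = (\<Sum>S\<in>{S. S \<subseteq> U}. if U = S then f S else 0)"
      unfolding gmult_def by (rule sum.cong) auto
    also have "\<dots> = f U" using True by (simp add: sum.delta' Pow_def[symmetric])
    finally show ?thesis .
  qed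
qed

typedef (overloaded) ('a::comm_ring_1) gr = "{f::'a grass. grass f}" morphisms gc Gr
  by (rule exI[of _ "\<lambda>_. 0"]) simp

lemma grass_gc[simp]: "grass (gc x)" using gc by simp
lemma gc_Gr[simp]: "grass f \<Longrightarrow> gc (Gr f) = f" by (simp add: Gr_inverse)
lemma gr_eqI: "gc x = gc y \<Longrightarrow> x = y" by (simp add: gc_inject)

instantiation gr :: (comm_ring_1) ring_1
begin
definition "0 = Gr (\<lambda>_. 0)"
definition "1 = Gr (\<lambda>U. if U = {} then 1 else 0)"
definition "x + y = Gr (\<lambda>U. gc x U + gc y U)"
definition "- x = Gr (\<lambda>U. - gc x U)"
definition "x - y = Gr (\<lambda>U. gc x U - gc y U)"
definition "x * y = Gr (gmult (gc x) (gc y))"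

lemma gc_zero[simp]: "gc (0::'a gr) = (\<lambda>_. 0)" unfolding zero_gr_def by simp
lemma gc_one[simp]: "gc (1::'a gr) = (\<lambda>U. if U = {} then 1 else 0)" unfolding one_gr_def by simp
lemma gc_add[simp]: "gc (x + y) = (\<lambda>U. gc x U + gc y U)" unfolding plus_gr_def by simp
lemma gc_uminus[simp]: "gc (- x) = (\<lambda>U. - gc x U)" unfolding uminus_gr_def by simp
lemma gc_diff[simp]: "gc (x - y) = (\<lambda>U. gc x U - gc y U)" unfolding minus_gr_def by simp
lemma gc_mult: "gc (x * y) = gmult (gc x) (gc y)" unfolding times_gr_def by simp

instance
proof
  fix a b c :: "'a gr"
  show "a * b * c = a * (b * c)" by (rule gr_eqI) (simp add: gc_mult gmult_assoc)
  show "a + b + c = a + (b + c)" by (rule gr_eqI) (simp add: add.assoc)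
  show "a + b = b + a" by (rule gr_eqI) (simp add: add.commute)
  show "0 + a = a" by (rule gr_eqI) simp
  show "- a + a = 0" by (rule gr_eqI) simp
  show "a - b = a + - b" by (rule gr_eqI) simp
  show "1 * a = a" by (rule gr_eqI) (simp add: gc_mult gmult_one_left)
  show "a * 1 = a" by (rule gr_eqI) (simp add: gc_mult gmult_one_right)
  show "(a + b) * c = a * c + b * c" by (rule gr_eqI) (simp add: gc_mult gmult_add_left)
  show "a * (b + c) = a * b + a * c" by (rule gr_eqI) (simp add: gc_mult gmult_add_right)
  show "(0::'a gr) \<noteq> 1"
  proof
    assume "(0::'a gr) = 1"
    hence "gc (0::'a gr) {} = gc (1::'a gr) {}" by simp
    thus False by simp
  qed
qed
end

lemma gc_sum: "gc (sum f A) = (\<lambda>U. \<Sum>a\<in>A. gc (f a) U)"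
  by (induct A rule: infinite_finite_induct) auto

lemma gc_of_nat: "gc (of_nat k :: 'a::comm_ring_1 gr) = (\<lambda>U. if U = {} then of_nat k else 0)"
  by (induct k) auto

lemma gc_of_nat_mult: "gc (of_nat k * x :: 'a::comm_ring_1 gr) = (\<lambda>U. of_nat k * gc x U)"
proof -
  have "gc (of_nat k * x) = gmult (\<lambda>U. if U = {} then of_nat k else 0) (gc x)"
    by (simp add: gc_mult gc_of_nat)
  also have "gmult (\<lambda>U. if U = {} then of_nat k else 0) (gc x) = (\<lambda>U. of_nat k * gc x U)"
  proof
    fix U
    show "gmult (\<lambda>U. if U = {} then of_nat k else 0) (gc x) U = of_nat k * gc x U"
    proof (cases "finite U")
      case False
      have "gc x U = 0" using grass_gc[of x] False unfolding grass_def by blast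
      thus ?thesis using False by (simp add: gmult_infinite)
    next
      case True
      have "gmult (\<lambda>U. if U = {} then of_nat k else 0) (gc x) U = (\<Sum>S\<in>{S. S \<subseteq> U}. if {} = S then of_nat k * gc x (U - S) else 0)"
        unfolding gmult_def by (rule sum.cong) auto
      also have "\<dots> = of_nat k * gc x U" using True by (simp add: sum.delta' Pow_def[symmetric])
      finally show ?thesis .
    qed
  qed
  finally show ?thesis .
qed


lemma gc_mult_nonzero:
  assumes "gc (x * y) U \<noteq> 0"
  shows "finite U \<and> (\<exists>S. S \<subseteq> U \<and> gc x S \<noteq> 0 \<and> gc y (U - S) \<noteq> 0)"
  using gmult_nonzero[of "gc x" "gc y" U] assms by (simp add: gc_mult)

definition hasp :: "nat \<Rightarrow> 'a::comm_ring_1 gr \<Rightarrow> bool" where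
  "hasp a x \<longleftrightarrow> (\<forall>S. gc x S \<noteq> 0 \<longrightarrow> card S mod 2 = a mod 2)"

lemma gc_fin: "gc x S \<noteq> 0 \<Longrightarrow> finite S"
  using grass_gc[of x] unfolding grass_def by blast

lemma hasp_mult: "hasp a x \<Longrightarrow> hasp b y \<Longrightarrow> hasp (a + b) (x * y)"
  unfolding hasp_def
proof (intro allI impI)
  fix U assume hx: "\<forall>S. gc x S \<noteq> 0 \<longrightarrow> card S mod 2 = a mod 2"
    and hy: "\<forall>S. gc y S \<noteq> 0 \<longrightarrow> card S mod 2 = b mod 2" and U: "gc (x * y) U \<noteq> 0"
  obtain S where S: "finite U" "S \<subseteq> U" "gc x S \<noteq> 0" "gc y (U - S) \<noteq> 0"
    using gc_mult_nonzero[OF U] by blast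
  have fS: "finite S" using finite_subset[OF S(2) S(1)] .
  have eU: "S \<union> (U - S) = U" using S(2) by blast
  have "card (S \<union> (U - S)) = card S + card (U - S)"
    by (rule card_Un_disjoint) (use fS S(1) in auto)
  hence "card U = card S + card (U - S)" unfolding eU .
  moreover have ha: "card S mod 2 = a mod 2" using hx S(3) by blast
  moreover have hb: "card (U - S) mod 2 = b mod 2" using hy S(4) by blast
  ultimately show "card U mod 2 = (a + b) mod 2" by (metis mod_add_eq)
qed

lemma hasp_zero[simp]: "hasp a 0" unfolding hasp_def by simp
lemma hasp_one: "hasp 0 1" unfolding hasp_def by simp
lemma hasp_add: "hasp a x \<Longrightarrow> hasp a y \<Longrightarrow> hasp a (x + y)" unfolding hasp_def
  by (metis add.right_neutral gc_add)
lemma hasp_diff: "hasp a x \<Longrightarrow> hasp a y \<Longrightarrow> hasp a (x - y)" unfolding hasp_def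
  by (metis diff_self gc_diff diff_zero)
lemma hasp_uminus: "hasp a x \<Longrightarrow> hasp a (- x)" unfolding hasp_def by simp
lemma hasp_sum: "(\<And>i. i \<in> A \<Longrightarrow> hasp a (f i)) \<Longrightarrow> hasp a (sum f A)"
  by (induct A rule: infinite_finite_induct) (auto intro: hasp_add)
lemma hasp_mod: "hasp (a mod 2) x = hasp a x" unfolding hasp_def by simp
lemma hasp_of_nat_mult: "hasp a x \<Longrightarrow> hasp a (of_nat k * x)"
  unfolding hasp_def gc_of_nat_mult by (metis mult_zero_right)

lemma gsign_swap:
  assumes "finite S" "finite T" "S \<inter> T = {}"
  shows "(gsign S T :: 'a::comm_ring_1) = (-1) ^ (card S * card T) * gsign T S"
proof -
  have "(-1::'a) ^ (card S * card T) * gsign T S = (-1) ^ (ninv S T + ninv T S) * (-1) ^ ninv T S"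
    unfolding gsign_pow ninv_swap[OF assms] ..
  also have "\<dots> = (-1) ^ ninv S T * ((-1) ^ ninv T S * (-1) ^ ninv T S)"
    by (simp add: power_add mult_ac)
  also have "(-1::'a) ^ ninv T S * (-1) ^ ninv T S = 1"
    by (simp add: power_add[symmetric] mult_2[symmetric])
  finally show ?thesis by (simp add: gsign_pow)
qed

lemma gmult_swap_form:
  assumes "finite U"
  shows "gmult g f U = (\<Sum>S\<in>{S. S \<subseteq> U}. gsign (U - S) S * g (U - S) * f S)"
  unfolding gmult_def
proof (rule sum.reindex_bij_witness[where i = "\<lambda>S. U - S" and j = "\<lambda>S. U - S"])
qed (auto simp: Diff_Diff_Int Int_absorb1 Int_absorb2)

lemma comm_general:
  assumes hx: "\<And>S T. gc x S \<noteq> 0 \<Longrightarrow> gc y T \<noteq> 0 \<Longrightarrow> S \<inter> T = {} \<Longrightarrow> (-1::'a::comm_ring_1) ^ (card S * card T) = c"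
  shows "gc (x * y) = (\<lambda>U. c * gc (y * x) U)"
proof
  fix U
  show "gc (x * y) U = c * gc (y * x) U"
  proof (cases "finite U")
    case False thus ?thesis by (simp add: gc_mult gmult_infinite)
  next
    case fin: True
    have "gc (x * y) U = (\<Sum>S\<in>{S. S \<subseteq> U}. gsign S (U - S) * gc x S * gc y (U - S))"
      by (simp add: gc_mult gmult_def)
    also have "\<dots> = (\<Sum>S\<in>{S. S \<subseteq> U}. c * (gsign (U - S) S * gc y (U - S) * gc x S))"
    proof (rule sum.cong[OF refl])
      fix S assume "S \<in> {S. S \<subseteq> U}"
      hence S: "S \<subseteq> U" by simp
      show "gsign S (U - S) * gc x S * gc y (U - S) = c * (gsign (U - S) S * gc y (U - S) * gc x S)"
      proof (cases "gc x S \<noteq> 0 \<and> gc y (U - S) \<noteq> 0")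
        case True
        have "gsign S (U - S) = (-1::'a) ^ (card S * card (U - S)) * gsign (U - S) S"
          by (rule gsign_swap) (use S fin finite_subset[OF S fin] in auto)
        also have "(-1::'a) ^ (card S * card (U - S)) = c" using hx True by auto
        finally show ?thesis by (simp add: mult_ac)
      next
        case False thus ?thesis by auto
      qed
    qed
    also have "\<dots> = c * gc (y * x) U"
      by (simp add: gc_mult gmult_swap_form[OF fin] sum_distrib_left)
    finally show ?thesis .
  qed
qed

lemma comm_even: "hasp 0 x \<Longrightarrow> x * y = y * x"
proof -
  assume h: "hasp 0 x"
  have "gc (x * y) = (\<lambda>U. 1 * gc (y * x) U)"
    by (rule comm_general) (use h in \<open>auto simp: hasp_def\<close>)
  thus ?thesis by (intro gr_eqI) simp
qed

lemma anticomm_odd: "hasp 1 x \<Longrightarrow> hasp 1 y \<Longrightarrow> x * y = - (y * x)"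
proof -
  assume h: "hasp 1 x" "hasp 1 y"
  have "gc (x * y) = (\<lambda>U. (-1) * gc (y * x) U)"
  proof (rule comm_general)
    fix S T assume "gc x S \<noteq> 0" "gc y T \<noteq> 0"
    hence "odd (card S)" "odd (card T)" using h unfolding hasp_def by (simp_all add: odd_iff_mod_2_eq_one)
    thus "(-1::'a) ^ (card S * card T) = -1" by (simp add: minus_one_power_iff)
  qed
  thus ?thesis by (intro gr_eqI) simp
qed


definition avoid :: "nat \<Rightarrow> 'a::comm_ring_1 gr \<Rightarrow> bool" where
  "avoid m x \<longleftrightarrow> (\<forall>S. gc x S \<noteq> 0 \<longrightarrow> m \<notin> S)"

lemma avoid_zero[simp]: "avoid m 0" unfolding avoid_def by simp
lemma avoid_one[simp]: "avoid m 1" unfolding avoid_def by simp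
lemma avoid_add: "avoid m x \<Longrightarrow> avoid m y \<Longrightarrow> avoid m (x + y)" unfolding avoid_def
  by (metis add.right_neutral gc_add)
lemma avoid_diff: "avoid m x \<Longrightarrow> avoid m y \<Longrightarrow> avoid m (x - y)" unfolding avoid_def
  by (metis diff_self gc_diff diff_zero)
lemma avoid_uminus: "avoid m x \<Longrightarrow> avoid m (- x)" unfolding avoid_def by simp
lemma avoid_mult: "avoid m x \<Longrightarrow> avoid m y \<Longrightarrow> avoid m (x * y)" unfolding avoid_def
proof (intro allI impI)
  fix U assume hx: "\<forall>S. gc x S \<noteq> 0 \<longrightarrow> m \<notin> S" and hy: "\<forall>S. gc y S \<noteq> 0 \<longrightarrow> m \<notin> S"
    and U: "gc (x * y) U \<noteq> 0"
  obtain S where S: "finite U" "S \<subseteq> U" "gc x S \<noteq> 0" "gc y (U - S) \<noteq> 0"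
    using gc_mult_nonzero[OF U] by blast
  have "m \<notin> S" using hx S(3) by blast
  moreover have "m \<notin> U - S" using hy S(4) by blast
  ultimately show "m \<notin> U" by blast
qed
lemma avoid_sum: "(\<And>i. i \<in> A \<Longrightarrow> avoid m (f i)) \<Longrightarrow> avoid m (sum f A)"
  by (induct A rule: infinite_finite_induct) (auto intro: avoid_add)
lemma avoid_of_nat_mult: "avoid m x \<Longrightarrow> avoid m (of_nat k * x)"
  unfolding avoid_def gc_of_nat_mult by (metis mult_zero_right)

lemma avoid_exists:
  assumes "finite A"
  shows "\<exists>m. \<forall>x\<in>A. avoid m x"
proof -
  define V where "V = (\<Union>x\<in>A. \<Union>{S. gc x S \<noteq> 0})"
  have "finite V" unfolding V_def using assms
  proof (intro finite_UN_I)
    fix x assume "x \<in> A"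
    show "finite (\<Union>{S. gc x S \<noteq> 0})"
      using grass_gc[of x] unfolding grass_def by auto
  qed
  then obtain m where "m \<notin> V" using ex_new_if_finite[OF infinite_UNIV_nat] by blast
  thus ?thesis unfolding V_def avoid_def by blast
qed

definition th :: "nat \<Rightarrow> 'a::comm_ring_1 gr" where
  "th m = Gr (\<lambda>U. if U = {m} then 1 else 0)"

lemma grass_th: "grass (\<lambda>U. if U = {m} then (1::'a::comm_ring_1) else 0)"
proof -
  have "{U. (if U = {m} then (1::'a) else 0) \<noteq> 0} = {{m}}" by auto
  thus ?thesis unfolding grass_def by auto
qed

lemma gc_th: "gc (th m) = (\<lambda>U. if U = {m} then 1 else 0)"
  unfolding th_def by (rule gc_Gr[OF grass_th])

lemma hasp_th: "hasp 1 (th m)" unfolding hasp_def gc_th by simp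

lemma gc_th_mult:
  "gc (th m * y) U = (if finite U \<and> m \<in> U then gsign {m} (U - {m}) * gc y (U - {m}) else 0)"
proof (cases "finite U")
  case False thus ?thesis by (simp add: gc_mult gmult_infinite)
next
  case True
  have "gc (th m * y) U = (\<Sum>S\<in>{S. S \<subseteq> U}. if {m} = S then gsign S (U - S) * gc y (U - S) else 0)"
    unfolding gc_mult gmult_def gc_th by (rule sum.cong) auto
  also have "\<dots> = (if m \<in> U then gsign {m} (U - {m}) * gc y (U - {m}) else 0)"
    using True by (simp add: sum.delta Pow_def[symmetric])
  finally show ?thesis using True by simp
qed

lemma gsign_sq: "gsign S T * gsign S T = (1::'a::comm_ring_1)"
  unfolding gsign_def by simp

lemma th_mult_avoid_zero: "avoid m y \<Longrightarrow> m \<notin> U \<Longrightarrow> gc (th m * y) U = 0"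
  by (simp add: gc_th_mult)

lemma th_cancel:
  assumes "avoid m y" "avoid m z" "th m * y = th m * z"
  shows "y = z"
proof (rule gr_eqI, rule ext)
  fix S
  show "gc y S = gc z S"
  proof (cases "m \<in> S \<or> infinite S")
    case True
    hence "gc y S = 0" "gc z S = 0" using assms(1,2) gc_fin unfolding avoid_def by blast+
    thus ?thesis by simp
  next
    case False
    hence e: "insert m S - {m} = S" "finite (insert m S)" "m \<in> insert m S" by auto
    have "gc (th m * y) (insert m S) = gc (th m * z) (insert m S)" using assms(3) by simp
    hence "gsign {m} S * gc y S = gsign {m} S * gc z S" unfolding gc_th_mult e(1) using e by simp
    hence "gsign {m} S * (gsign {m} S * gc y S) = gsign {m} S * (gsign {m} S * gc z S)" by simp
    thus ?thesis by (simp add: mult.assoc[symmetric] gsign_sq)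
  qed
qed

lemma th_separate:
  assumes "avoid m x" "avoid m x'" "avoid m y" "avoid m z" "x + th m * y = x' + th m * z"
  shows "x = x'"
proof (rule gr_eqI, rule ext)
  fix S
  show "gc x S = gc x' S"
  proof (cases "m \<in> S")
    case True
    hence "gc x S = 0" "gc x' S = 0" using assms(1,2) unfolding avoid_def by blast+
    thus ?thesis by simp
  next
    case False
    have "gc (x + th m * y) S = gc (x' + th m * z) S" using assms(5) by simp
    thus ?thesis using False th_mult_avoid_zero[OF assms(3) False] th_mult_avoid_zero[OF assms(4) False]
      by simp
  qed
qed

lemma th_th: "th m * th m = (0::'a::comm_ring_1 gr)"
proof (rule gr_eqI, rule ext)
  fix U
  have "U - {m} \<noteq> {m}" by auto
  thus "gc (th m * th m :: 'a gr) U = gc 0 U" unfolding gc_th_mult by (simp add: gc_th)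
qed

typedef (overloaded) ('a::comm_ring_1) ev = "{x::'a gr. hasp 0 x}" morphisms eg Ev
  by (rule exI[of _ 0]) simp

lemma hasp_eg[simp]: "hasp 0 (eg x)" using eg by simp
lemma eg_Ev[simp]: "hasp 0 x \<Longrightarrow> eg (Ev x) = x" by (simp add: Ev_inverse)
lemma ev_eqI: "eg x = eg y \<Longrightarrow> x = y" by (simp add: eg_inject)

instantiation ev :: (comm_ring_1) comm_ring_1
begin
definition "0 = Ev 0"
definition "1 = Ev 1"
definition "x + y = Ev (eg x + eg y)"
definition "- x = Ev (- eg x)"
definition "x - y = Ev (eg x - eg y)"
definition "x * y = Ev (eg x * eg y)"

lemma eg_zero[simp]: "eg (0::'a ev) = 0" unfolding zero_ev_def by simp
lemma eg_one[simp]: "eg (1::'a ev) = 1" unfolding one_ev_def by (simp add: hasp_one)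
lemma eg_add[simp]: "eg (x + y) = eg x + eg y" unfolding plus_ev_def by (simp add: hasp_add)
lemma eg_uminus[simp]: "eg (- x) = - eg x" unfolding uminus_ev_def by (simp add: hasp_uminus)
lemma eg_diff[simp]: "eg (x - y) = eg x - eg y" unfolding minus_ev_def by (simp add: hasp_diff)
lemma eg_mult[simp]: "eg (x * y) = eg x * eg y" unfolding times_ev_def
  using hasp_mult[of 0 "eg x" 0 "eg y"] by simp

instance
proof
  fix a b c :: "'a ev"
  show "a * b * c = a * (b * c)" by (rule ev_eqI) (simp add: mult.assoc)
  show "a * b = b * a" by (rule ev_eqI) (simp add: comm_even)
  show "1 * a = a" by (rule ev_eqI) simp
  show "(a + b) * c = a * c + b * c" by (rule ev_eqI) (simp add: distrib_right)
  show "a + b + c = a + (b + c)" by (rule ev_eqI) (simp add: add.assoc)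
  show "a + b = b + a" by (rule ev_eqI) (simp add: add.commute)
  show "0 + a = a" by (rule ev_eqI) simp
  show "- a + a = 0" by (rule ev_eqI) simp
  show "a - b = a + - b" by (rule ev_eqI) simp
  show "(0::'a ev) \<noteq> 1"
  proof
    assume "(0::'a ev) = 1"
    hence "eg (0::'a ev) = eg 1" by simp
    thus False by simp
  qed
qed
end

lemma eg_sum: "eg (sum f A) = (\<Sum>a\<in>A. eg (f a))"
  by (induct A rule: infinite_finite_induct) auto

lemma eg_of_nat: "eg (of_nat k) = of_nat k"
  by (induct k) auto



definition mmul :: "nat \<Rightarrow> (nat \<Rightarrow> nat \<Rightarrow> 'a::comm_ring_1 gr) \<Rightarrow> (nat \<Rightarrow> nat \<Rightarrow> 'a gr) \<Rightarrow> nat \<Rightarrow> nat \<Rightarrow> 'a gr" where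
  "mmul n X Y = (\<lambda>i j. \<Sum>k<n. X i k * Y k j)"

fun mpw :: "nat \<Rightarrow> (nat \<Rightarrow> nat \<Rightarrow> 'a::comm_ring_1 gr) \<Rightarrow> nat \<Rightarrow> nat \<Rightarrow> nat \<Rightarrow> 'a gr" where
  "mpw n X 0 = (\<lambda>i j. if i = j then 1 else 0)"
| "mpw n X (Suc t) = mmul n X (mpw n X t)"

lemma mmul_assoc: "mmul n X (mmul n Y Z) i j = mmul n (mmul n X Y) Z i j"
  unfolding mmul_def
  by (simp add: sum_distrib_left sum_distrib_right mult.assoc) (rule sum.swap)

lemma mpw_add: "i < n \<Longrightarrow> mpw n X (a + b) i j = mmul n (mpw n X a) (mpw n X b) i j"
proof (induction a arbitrary: i j)
  case 0
  have "mmul n (mpw n X 0) (mpw n X b) i j = (\<Sum>k<n. if i = k then mpw n X b k j else 0)"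
    unfolding mmul_def by (rule sum.cong) auto
  also have "\<dots> = mpw n X b i j" using 0 by (simp add: sum.delta)
  finally show ?case by simp
next
  case (Suc a)
  have "mpw n X (Suc a + b) i j = (\<Sum>k<n. X i k * mpw n X (a + b) k j)"
    by (simp add: mmul_def)
  also have "\<dots> = (\<Sum>k<n. X i k * mmul n (mpw n X a) (mpw n X b) k j)"
    using Suc.IH by (intro sum.cong) auto
  also have "\<dots> = mmul n X (mmul n (mpw n X a) (mpw n X b)) i j" by (simp add: mmul_def)
  also have "\<dots> = mmul n (mpw n X (Suc a)) (mpw n X b) i j" by (simp add: mmul_assoc)
  finally show ?case .
qed

lemma hasp_mpw:
  assumes "\<And>i j. hasp 1 (X i j)"
  shows "hasp t (mpw n X t i j)"
proof (induction t arbitrary: i j)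
  case 0 thus ?case by (simp add: hasp_one)
next
  case (Suc t)
  show ?case unfolding mpw.simps mmul_def
    using hasp_mult[OF assms Suc.IH] by (auto intro: hasp_sum)
qed

lemma avoid_mpw:
  assumes "\<And>i j. avoid m (X i j)"
  shows "avoid m (mpw n X t i j)"
proof (induction t arbitrary: i j)
  case 0 thus ?case by simp
next
  case (Suc t)
  show ?case unfolding mpw.simps mmul_def
    using avoid_mult[OF assms Suc.IH] by (auto intro: avoid_sum)
qed

lemma torsion_gr:
  fixes x :: "'a::field_char_0 gr"
  assumes "k > 0" "of_nat k * x = 0"
  shows "x = 0"
proof (rule gr_eqI, rule ext)
  fix U
  have "gc (of_nat k * x) U = gc 0 U" using assms(2) by simp
  hence "of_nat k * gc x U = 0" unfolding gc_of_nat_mult by simp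
  thus "gc x U = gc 0 U" using assms(1) by simp
qed

lemma torsion_ev:
  fixes x :: "'a::field_char_0 ev"
  assumes "k > 0" "of_nat k * x = 0"
  shows "x = 0"
proof (rule ev_eqI)
  have "eg (of_nat k * x) = eg 0" using assms(2) by simp
  hence "of_nat k * eg x = 0" by (simp add: eg_of_nat)
  thus "eg x = eg 0" using torsion_gr[OF assms(1)] by simp
qed

lemma key_expand:
  fixes c b x y t :: "'a::comm_ring_1 gr"
  assumes ct: "\<And>z. c * (t * z) = t * (c * z)"
    and bt: "\<And>z. b * (t * z) = - (t * (b * z))"
    and tt: "\<And>z. t * (t * z) = 0"
  shows "(c + t * b) * (x + of_nat k * (t * y)) = c * x + t * (b * x) + of_nat k * (t * (c * y))"
proof -
  have K: "\<And>z w. z * (of_nat k * w) = of_nat k * (z * w)"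
    by (metis mult.assoc mult_of_nat_commute)
  have "(c + t * b) * (x + of_nat k * (t * y)) =
      c * x + c * (of_nat k * (t * y)) + t * (b * x) + t * (b * (of_nat k * (t * y)))"
    by (simp add: algebra_simps)
  also have "c * (of_nat k * (t * y)) = of_nat k * (t * (c * y))" by (simp add: K ct)
  also have "t * (b * (of_nat k * (t * y))) = 0" by (simp add: K bt tt)
  finally show ?thesis by (simp add: algebra_simps)
qed


theorem corollary2p5:
  fixes B :: "'a::field_char_0 gmat" and n :: nat
  assumes "n \<ge> 2"
    and "\<forall>i<n. \<forall>j<n. grass_odd (B i j)"
    and "\<forall>t. 1 \<le> t \<and> t \<le> 2*n - 2 \<longrightarrow> gtrace n (gmat_pow n B t) = gzero"
  shows "(\<forall>i<n. \<forall>j<n. (\<lambda>U. of_nat n * gmat_pow n B (2*n - 1) i j U)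
            = (if i = j then gtrace n (gmat_pow n B (2*n - 1)) else gzero))
    \<and> (\<exists>c. \<forall>i<n. \<forall>j<n. gmat_pow n B (2*n - 1) i j = (if i = j then c else gzero))
    \<and> (gtrace n (gmat_pow n B (2*n - 1)) = gzero
         \<longrightarrow> (\<forall>i<n. \<forall>j<n. gmat_pow n B (2*n - 1) i j = gzero))"
proof -
  define Bg where "Bg = (\<lambda>i j. if i < n \<and> j < n then Gr (B i j) else (0::'a gr))"
  have gB: "grass (B i j)" "\<forall>S. B i j S \<noteq> 0 \<longrightarrow> odd (card S)" if "i < n" "j < n" for i j
    using assms(2) that unfolding grass_odd_def by auto
  have gcB: "gc (Bg i j) = B i j" if "i < n" "j < n" for i j
    unfolding Bg_def using that gB(1)[OF that] by simp
  have oddB: "hasp 1 (Bg i j)" for i j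
  proof (cases "i < n \<and> j < n")
    case True
    thus ?thesis unfolding hasp_def gcB[OF conjunct1[OF True] conjunct2[OF True]]
      using gB(2)[of i j] by (simp add: odd_iff_mod_2_eq_one)
  next
    case False thus ?thesis unfolding Bg_def using False by (simp only: if_False) simp
  qed
  have bridge: "gmat_pow n B t i j = gc (mpw n Bg t i j)" if "i < n" "j < n" for t i j
    using that
  proof (induction t arbitrary: i j)
    case 0
    show ?case by (rule ext) (simp add: gmat_one_def)
  next
    case (Suc t)
    have "gmat_pow n B (Suc t) i j = (\<lambda>U. \<Sum>k<n. gmult (B i k) (gmat_pow n B t k j) U)"
      by (simp add: gmat_mult_def)
    also have "\<dots> = (\<lambda>U. \<Sum>k<n. gc (Bg i k * mpw n Bg t k j) U)"
      using Suc by (intro ext sum.cong) (auto simp: gc_mult gcB)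
    also have "\<dots> = gc (mpw n Bg (Suc t) i j)"
      by (simp add: mmul_def gc_sum)
    finally show ?case .
  qed
  have trbridge: "gtrace n (gmat_pow n B t) = gc (\<Sum>i<n. mpw n Bg t i i)" for t
    unfolding gtrace_def gc_sum by (intro ext sum.cong) (auto simp: bridge)
  have gzero: "gzero = gc (0::'a gr)" unfolding gzero_def by simp
  have trhyp: "(\<Sum>i<n. mpw n Bg t i i) = 0" if "1 \<le> t" "t \<le> 2*n - 2" for t
    using assms(3) that unfolding trbridge gzero by (auto intro: gr_eqI)
  obtain m where avB0: "\<forall>x\<in>(\<lambda>(i,j). Bg i j) ` ({..<n} \<times> {..<n}). avoid m x"
    using avoid_exists[of "(\<lambda>(i,j). Bg i j) ` ({..<n} \<times> {..<n})"] by auto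
  have avB: "avoid m (Bg i j)" for i j
  proof (cases "i < n \<and> j < n")
    case True thus ?thesis using avB0 by auto
  next
    case False thus ?thesis unfolding Bg_def using False by (simp only: if_False) simp
  qed
  define \<theta> where "\<theta> = (th m :: 'a gr)"
  have avP: "avoid m (mpw n Bg t i j)" for t i j by (rule avoid_mpw[OF avB])
  define C where "C = mpw n Bg 2"
  have hC: "hasp 0 (C i j)" for i j
    using hasp_mpw[OF oddB, where t=2 and n=n and i=i and j=j] unfolding C_def hasp_mod[symmetric, of 2] by simp
  have hTB: "hasp 0 (\<theta> * Bg i j)" for i j
    using hasp_mult[OF hasp_th[where m=m] oddB[where i=i and j=j]] unfolding \<theta>_def hasp_mod[symmetric, of "1+1"] by simp
  define dd where "dd = (\<lambda>i j. Ev (C i j + \<theta> * Bg i j))"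
  have egdd: "eg (dd i j) = C i j + \<theta> * Bg i j" for i j
    unfolding dd_def using hasp_add[OF hC hTB] by simp
  have ct: "C i l * (\<theta> * z) = \<theta> * (C i l * z)" for i l z
    using comm_even[OF hC[where i=i and j=l], where y=\<theta>] by (simp add: mult.assoc[symmetric])
  have bt: "Bg i l * (\<theta> * z) = - (\<theta> * (Bg i l * z))" for i l z
    using anticomm_odd[OF oddB[where i=i and j=l] hasp_th[where m=m]] unfolding \<theta>_def[symmetric]
    by (simp add: mult.assoc[symmetric])
  have tt: "\<theta> * (\<theta> * z) = 0" for z
    unfolding \<theta>_def by (simp add: mult.assoc[symmetric] th_th)
  have Kc: "of_nat k * (\<theta> * z) = \<theta> * (of_nat k * z)" for k z
    by (metis mult.assoc mult_of_nat_commute)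
  have claim: "eg (fpow n dd k i j) = mpw n Bg (2*k) i j + of_nat k * (\<theta> * mpw n Bg (2*k - 1) i j)"
    if "i < n" "j < n" for k i j
    using that
  proof (induction k arbitrary: i j)
    case 0
    show ?case by (cases "i = j") auto
  next
    case (Suc k)
    have "eg (fpow n dd (Suc k) i j) = (\<Sum>l<n. eg (dd i l) * eg (fpow n dd k l j))"
      by (simp add: eg_sum)
    also have "\<dots> = (\<Sum>l<n. (C i l + \<theta> * Bg i l) * (mpw n Bg (2*k) l j + of_nat k * (\<theta> * mpw n Bg (2*k - 1) l j)))"
      using Suc by (intro sum.cong) (auto simp: egdd)
    also have "\<dots> = (\<Sum>l<n. C i l * mpw n Bg (2*k) l j + \<theta> * (Bg i l * mpw n Bg (2*k) l j)
          + of_nat k * (\<theta> * (C i l * mpw n Bg (2*k - 1) l j)))"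
      by (intro sum.cong refl key_expand ct bt tt)
    also have "\<dots> = mmul n C (mpw n Bg (2*k)) i j + \<theta> * mmul n Bg (mpw n Bg (2*k)) i j
          + of_nat k * (\<theta> * mmul n C (mpw n Bg (2*k - 1)) i j)"
      by (simp add: mmul_def sum.distrib sum_distrib_left)
    also have "mmul n C (mpw n Bg (2*k)) i j = mpw n Bg (2 * Suc k) i j"
      unfolding C_def using mpw_add[OF Suc.prems(1), of Bg 2 "2*k"] by simp
    also have "mmul n Bg (mpw n Bg (2*k)) i j = mpw n Bg (2 * Suc k - 1) i j" by simp
    also have "of_nat k * (\<theta> * mmul n C (mpw n Bg (2*k - 1)) i j) = of_nat k * (\<theta> * mpw n Bg (2 * Suc k - 1) i j)"
    proof (cases k)
      case 0 thus ?thesis by simp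
    next
      case (Suc k')
      have "2 * Suc k - 1 = 2 + (2*k - 1)" using Suc by simp
      thus ?thesis unfolding C_def using mpw_add[OF \<open>i < n\<close>, of Bg 2 "2*k - 1"] by simp
    qed
    finally show ?case by (simp add: algebra_simps)
  qed
  have egtr: "eg (ftr n dd k) = (\<Sum>i<n. mpw n Bg (2*k) i i) + of_nat k * (\<theta> * (\<Sum>i<n. mpw n Bg (2*k - 1) i i))" for k
    unfolding ftr_def eg_sum
    by (simp add: claim sum.distrib sum_distrib_left)
  have tr0: "ftr n dd k = 0" if "1 \<le> k" "k < n" for k
  proof (rule ev_eqI)
    have "(\<Sum>i<n. mpw n Bg (2*k) i i) = 0" using that by (intro trhyp) auto
    moreover have "(\<Sum>i<n. mpw n Bg (2*k - 1) i i) = 0" using that by (intro trhyp) auto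
    ultimately show "eg (ftr n dd k) = eg 0" unfolding egtr by simp
  qed
  have n1: "1 \<le> n" using assms(1) by simp
  have CH: "of_nat n * fpow n dd n i j = (if i = j then ftr n dd n else 0)" if "i < n" "j < n" for i j
    by (rule trace_CH[OF torsion_ev tr0 n1 that]) auto
  define T where "T = (\<Sum>i<n. mpw n Bg (2*n - 1) i i)"
  define T2 where "T2 = (\<Sum>i<n. mpw n Bg (2*n) i i)"
  have avT: "avoid m T" "avoid m T2" unfolding T_def T2_def by (auto intro!: avoid_sum avP)
  have main: "of_nat n * mpw n Bg (2*n - 1) i j = (if i = j then T else 0)" if ij: "i < n" "j < n" for i j
  proof -
    let ?N = "of_nat n :: 'a gr"
    let ?P = "mpw n Bg (2*n - 1) i j"
    let ?P2 = "mpw n Bg (2*n) i j"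
    have "eg (of_nat n * fpow n dd n i j) = eg (if i = j then ftr n dd n else 0)" using CH[OF ij] by simp
    hence "?N * (?P2 + ?N * (\<theta> * ?P)) = (if i = j then T2 + ?N * (\<theta> * T) else 0)"
      unfolding eg_mult eg_of_nat claim[OF ij] by (cases "i = j") (auto simp: egtr T_def T2_def)
    moreover have "?N * (?P2 + ?N * (\<theta> * ?P)) = ?N * ?P2 + \<theta> * (?N * (?N * ?P))"
      by (simp only: distrib_left Kc)
    moreover have "(if i = j then T2 + ?N * (\<theta> * T) else 0) = (if i = j then T2 else 0) + \<theta> * (if i = j then ?N * T else 0)"
      by (cases "i = j") (simp_all only: Kc if_True if_False mult_zero_right add_0_right simp_thms)
    ultimately have eq: "?N * ?P2 + \<theta> * (?N * (?N * ?P)) = (if i = j then T2 else 0) + \<theta> * (if i = j then ?N * T else 0)"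
      by simp
    have av1: "avoid m (?N * ?P2)" "avoid m (?N * (?N * ?P))" "avoid m (if i = j then T2 else 0)"
      "avoid m (if i = j then ?N * T else 0)"
      using avT by (auto intro!: avoid_of_nat_mult avP)
    have sep: "?N * ?P2 = (if i = j then T2 else 0)"
      by (rule th_separate[OF av1(1) av1(3) av1(2) av1(4) eq[unfolded \<theta>_def]])
    hence "\<theta> * (?N * (?N * ?P)) = \<theta> * (if i = j then ?N * T else 0)" using eq by simp
    hence "?N * (?N * ?P) = (if i = j then ?N * T else 0)"
      by (rule th_cancel[OF av1(2) av1(4), folded \<theta>_def])
    hence "?N * (?N * ?P - (if i = j then T else 0)) = 0" by (cases "i = j") (auto simp: right_diff_distrib)
    moreover have "n > 0" using n1 by simp
    ultimately have "?N * ?P - (if i = j then T else 0) = 0" by (rule torsion_gr[rotated])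
    thus ?thesis by simp
  qed
  have c1: "(\<lambda>U. of_nat n * gmat_pow n B (2*n - 1) i j U)
            = (if i = j then gtrace n (gmat_pow n B (2*n - 1)) else gzero)" if ij: "i < n" "j < n" for i j
  proof -
    have "(\<lambda>U. of_nat n * gmat_pow n B (2*n - 1) i j U) = gc (of_nat n * mpw n Bg (2*n - 1) i j)"
      unfolding gc_of_nat_mult bridge[OF ij] ..
    also have "\<dots> = gc (if i = j then T else 0)" unfolding main[OF ij] ..
    also have "\<dots> = (if i = j then gtrace n (gmat_pow n B (2*n - 1)) else gzero)"
      unfolding trbridge gzero T_def by simp
    finally show ?thesis .
  qed
  have nz: "(of_nat n :: 'a) \<noteq> 0" using n1 by simp
  define c where "c = (\<lambda>U. gtrace n (gmat_pow n B (2*n - 1)) U / of_nat n)"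
  have c2: "gmat_pow n B (2*n - 1) i j = (if i = j then c else gzero)" if ij: "i < n" "j < n" for i j
  proof (rule ext)
    fix U
    have "of_nat n * gmat_pow n B (2*n - 1) i j U = (if i = j then gtrace n (gmat_pow n B (2*n - 1)) U else gzero U)"
      using fun_cong[OF c1[OF ij], of U] by (simp split: if_splits)
    thus "gmat_pow n B (2*n - 1) i j U = (if i = j then c else gzero) U"
      unfolding c_def gzero_def using nz by (auto simp: field_simps split: if_splits)
  qed
  have c3: "gmat_pow n B (2*n - 1) i j = gzero"
    if tz: "gtrace n (gmat_pow n B (2*n - 1)) = gzero" and ij: "i < n" "j < n" for i j
  proof (rule ext)
    fix U
    have "of_nat n * gmat_pow n B (2*n - 1) i j U = 0"
      using fun_cong[OF c1[OF ij], of U] tz unfolding gzero_def by (simp split: if_splits)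
    thus "gmat_pow n B (2*n - 1) i j U = gzero U" unfolding gzero_def using nz by simp
  qed
  show ?thesis using c1 c2 c3 by blast
qed

end
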